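(* Let $\bm X=X_1\times\cdots\times X_n\in\mathbb{IR}^n$ with $\operatorname{wid}(X_i)>0$ for at least one $i$. Let $Z\subseteq\mathbb{R}$ be convex with $\sum_{i=1}^n x_i\in Z$ for all $\bm x\in\bm X$, and let $\varphi:Z\to\mathbb{R}$ be convex. Define $\mathcal P=\{j:\operatorname{wid}(X_j)>0\}$, $\theta_i=\operatorname{wid}(X_i)/\sum_{j\in\mathcal P}\operatorname{wid}(X_j)$ for $i\in\mathcal P$, $\underline\sigma=\sum_{i=1}^n\underline X_i$, $\overline\sigma=\sum_{i=1}^n\overline X_i$. Then for all $\bm x\in\bm X$, $$\varphi\Big(\sum_{i=1}^n x_i\Big)\ge\sum_{i=1}^n\varphi(x_i-\underline X_i+\underline\sigma)-(n-1)\varphi(\underline\sigma)=\sum_{i\in\mathcal P}\Big(\varphi(x_i-\underline X_i+\underline\sigma)-(1-\theta_i)\varphi(\underline\sigma)\Big),$$ $$\varphi\Big(\sum_{i=1}^n x_i\Big)\ge\sum_{i=1}^n\varphi(x_i-\overline X_i+\overline\sigma)-(n-1)\varphi(\overline\sigma)=\sum_{i\in\mathcal P}\Big(\varphi(x_i-\overline X_i+\overline\sigma)-(1-\theta_i)\varphi(\overline\sigma)\Big).$$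
   Context: $\mathbb{IR}^n$ is the set of boxes $\bm X=X_1\times\cdots\times X_n$ with $X_i=[\underline X_i,\overline X_i]$ compact real intervals; $\operatorname{wid}(X_i)=\overline X_i-\underline X_i$. *)

theory Defs
  imports "HOL-Analysis.Analysis"
begin

end

theory Submission
  imports Defs
begin

lemma two_pt:
  fixes \<phi> :: "real \<Rightarrow> real"
  assumes cv: "convex_on Z \<phi>" and s: "s \<in> Z" and e: "s + A + a \<in> Z" and sg: "A * a \<ge> 0"
  shows "\<phi> (s + A) + \<phi> (s + a) \<le> \<phi> s + \<phi> (s + A + a)"
proof (cases "A + a = 0")
  case True
  then have aA: "a = - A" by linarith
  then have "A * A \<le> 0" using sg by simp
  then have "A = 0" using mult_le_0_iff[of A A] by linarith
  then have "A = 0 \<and> a = 0" using aA by simp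
  then show ?thesis by simp
next
  case False
  define t where "t = A / (A + a)"
  have sg2: "(0 \<le> A \<and> 0 \<le> a) \<or> (A \<le> 0 \<and> a \<le> 0)" using sg by (simp add: zero_le_mult_iff)
  have t01: "t \<in> {0..1}"
  proof -
    have "0 \<le> t" unfolding t_def using sg2 by (auto simp: zero_le_divide_iff)
    moreover have "t \<le> 1" unfolding t_def using sg2 False by (auto simp: divide_le_eq_1)
    ultimately show ?thesis by simp
  qed
  have tA: "t * (A + a) = A" unfolding t_def using False by simp
  have 1: "s + A = (1 - t) *\<^sub>R s + t *\<^sub>R (s + A + a)"
  proof -
    have "(1 - t) * s + t * (s + A + a) = s + t * (A + a)" by (simp add: algebra_simps)
    then show ?thesis using tA by simp
  qed
  have 2: "s + a = (1 - (1 - t)) *\<^sub>R s + (1 - t) *\<^sub>R (s + A + a)"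
  proof -
    have "(1 - (1 - t)) * s + (1 - t) * (s + A + a) = s + (A + a) - t * (A + a)" by (simp add: algebra_simps)
    then show ?thesis using tA by simp
  qed
  have t01': "1 - t \<in> {0..1}" using t01 by auto
  have "\<phi> ((1 - t) *\<^sub>R s + t *\<^sub>R (s + A + a)) \<le> (1 - t) * \<phi> s + t * \<phi> (s + A + a)"
    using convex_onD[OF cv, of t s "s + A + a"] s e t01 by simp
  then have X: "\<phi> (s + A) \<le> (1 - t) * \<phi> s + t * \<phi> (s + A + a)"
    by (simp only: 1[symmetric])
  have "\<phi> ((1 - (1 - t)) *\<^sub>R s + (1 - t) *\<^sub>R (s + A + a)) \<le> (1 - (1 - t)) * \<phi> s + (1 - t) * \<phi> (s + A + a)"
    using convex_onD[OF cv, of "1 - t" s "s + A + a"] s e t01' by simp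
  then have Y: "\<phi> (s + a) \<le> (1 - (1 - t)) * \<phi> s + (1 - t) * \<phi> (s + A + a)"
    by (simp only: 2[symmetric])
  have X': "\<phi> (s + A) \<le> \<phi> s - t * \<phi> s + t * \<phi> (s + A + a)"
    using X by (simp add: left_diff_distrib)
  have Y': "\<phi> (s + a) \<le> t * \<phi> s + \<phi> (s + A + a) - t * \<phi> (s + A + a)"
    using Y by (simp add: left_diff_distrib)
  from X' Y' show ?thesis by linarith
qed

lemma superadd:
  fixes \<phi> :: "real \<Rightarrow> real" and a :: "nat \<Rightarrow> real"
  assumes cv: "convex_on Z \<phi>"
    and sgn: "(\<forall>i\<in>{1..n}. a i \<ge> 0) \<or> (\<forall>i\<in>{1..n}. a i \<le> 0)"
    and mem: "\<forall>m\<le>n. s + (\<Sum>i=1..m. a i) \<in> Z"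
  shows "m \<le> n \<Longrightarrow> (\<Sum>i=1..m. \<phi> (s + a i)) - (real m - 1) * \<phi> s \<le> \<phi> (s + (\<Sum>i=1..m. a i))"
proof (induction m)
  case 0
  then show ?case by simp
next
  case (Suc m)
  have IH: "(\<Sum>i=1..m. \<phi> (s + a i)) - (real m - 1) * \<phi> s \<le> \<phi> (s + (\<Sum>i=1..m. a i))"
    using Suc by simp
  have sZ: "s \<in> Z" using mem[rule_format, of 0] by simp
  have eZ: "s + (\<Sum>i=1..m. a i) + a (Suc m) \<in> Z"
    using mem[rule_format, of "Suc m"] Suc.prems by (simp add: add.assoc)
  have "(\<Sum>i=1..m. a i) * a (Suc m) \<ge> 0"
    using sgn
  proof (elim disjE)
    assume h: "\<forall>i\<in>{1..n}. a i \<ge> 0"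
    have "(\<Sum>i=1..m. a i) \<ge> 0" using h Suc.prems by (intro sum_nonneg) auto
    moreover have "a (Suc m) \<ge> 0" using h Suc.prems by auto
    ultimately show ?thesis by simp
  next
    assume h: "\<forall>i\<in>{1..n}. a i \<le> 0"
    have "(\<Sum>i=1..m. a i) \<le> 0" using h Suc.prems by (intro sum_nonpos) auto
    moreover have "a (Suc m) \<le> 0" using h Suc.prems by auto
    ultimately show ?thesis by (simp add: mult_nonpos_nonpos)
  qed
  from two_pt[OF cv sZ eZ this]
  have "\<phi> (s + (\<Sum>i=1..m. a i)) + \<phi> (s + a (Suc m)) \<le> \<phi> s + \<phi> (s + (\<Sum>i=1..m. a i) + a (Suc m))" .
  then show ?case using IH by (simp add: algebra_simps)
qed

theorem proposition3:
  fixes n :: nat and Xlo Xhi :: "nat \<Rightarrow> real" and Z :: "real set"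
    and \<phi> :: "real \<Rightarrow> real" and x :: "nat \<Rightarrow> real"
  assumes box: "\<forall>i\<in>{1..n}. Xlo i \<le> Xhi i"
    and somepos: "\<exists>i\<in>{1..n}. Xhi i - Xlo i > 0"
    and Zconv: "convex Z"
    and sumZ: "\<forall>y. (\<forall>i\<in>{1..n}. Xlo i \<le> y i \<and> y i \<le> Xhi i) \<longrightarrow> (\<Sum>i=1..n. y i) \<in> Z"
    and phiconv: "convex_on Z \<phi>"
    and xin: "\<forall>i\<in>{1..n}. Xlo i \<le> x i \<and> x i \<le> Xhi i"
  defines "P \<equiv> {j\<in>{1..n}. Xhi j - Xlo j > 0}"
    and "\<theta> \<equiv> (\<lambda>i. (Xhi i - Xlo i) / (\<Sum>j\<in>{k\<in>{1..n}. Xhi k - Xlo k > 0}. Xhi j - Xlo j))"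
    and "slo \<equiv> (\<Sum>i=1..n. Xlo i)"
    and "shi \<equiv> (\<Sum>i=1..n. Xhi i)"
  shows "\<phi> (\<Sum>i=1..n. x i) \<ge> (\<Sum>i=1..n. \<phi> (x i - Xlo i + slo)) - (real n - 1) * \<phi> slo
       \<and> (\<Sum>i=1..n. \<phi> (x i - Xlo i + slo)) - (real n - 1) * \<phi> slo
           = (\<Sum>i\<in>P. \<phi> (x i - Xlo i + slo) - (1 - \<theta> i) * \<phi> slo)
       \<and> \<phi> (\<Sum>i=1..n. x i) \<ge> (\<Sum>i=1..n. \<phi> (x i - Xhi i + shi)) - (real n - 1) * \<phi> shi
       \<and> (\<Sum>i=1..n. \<phi> (x i - Xhi i + shi)) - (real n - 1) * \<phi> shi
           = (\<Sum>i\<in>P. \<phi> (x i - Xhi i + shi) - (1 - \<theta> i) * \<phi> shi)"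
proof -
  have fP: "finite P" and Psub: "P \<subseteq> {1..n}" unfolding P_def by auto
  define W where "W = (\<Sum>j\<in>P. Xhi j - Xlo j)"
  have Wpos: "W > 0"
  proof -
    obtain i where i: "i \<in> P" using somepos unfolding P_def by auto
    have "W \<ge> Xhi i - Xlo i" unfolding W_def
      using fP i by (intro member_le_sum) (auto simp: P_def)
    moreover have "Xhi i - Xlo i > 0" using i P_def by auto
    ultimately show ?thesis by simp
  qed
  have th: "\<theta> = (\<lambda>i. (Xhi i - Xlo i) / W)" unfolding \<theta>_def W_def P_def ..
  have sumth: "(\<Sum>i\<in>P. \<theta> i) = 1"
    unfolding th using Wpos by (simp add: sum_divide_distrib[symmetric] W_def)
  have cardle: "card P \<le> n" using card_mono[OF _ Psub] by simp
  have eqgen: "(\<Sum>i=1..n. \<phi> (x i - c i + s)) - (real n - 1) * \<phi> s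
           = (\<Sum>i\<in>P. \<phi> (x i - c i + s) - (1 - \<theta> i) * \<phi> s)"
    if hc: "\<forall>i\<in>{1..n}-P. x i = c i" for c s
  proof -
    have "(\<Sum>i=1..n. \<phi> (x i - c i + s)) = (\<Sum>i\<in>P. \<phi> (x i - c i + s)) + (\<Sum>i\<in>{1..n}-P. \<phi> (x i - c i + s))"
      using sum.subset_diff[OF Psub finite_atLeastAtMost, of "\<lambda>i. \<phi> (x i - c i + s)"] by linarith
    also have "(\<Sum>i\<in>{1..n}-P. \<phi> (x i - c i + s)) = (\<Sum>i\<in>{1..n}-P. \<phi> s)"
      using hc by (intro sum.cong) auto
    also have "\<dots> = real (n - card P) * \<phi> s"
      using Psub by (simp add: card_Diff_subset finite_subset)
    finally have A: "(\<Sum>i=1..n. \<phi> (x i - c i + s)) = (\<Sum>i\<in>P. \<phi> (x i - c i + s)) + real (n - card P) * \<phi> s" .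
    have B: "(\<Sum>i\<in>P. \<phi> (x i - c i + s) - (1 - \<theta> i) * \<phi> s)
        = (\<Sum>i\<in>P. \<phi> (x i - c i + s)) - real (card P) * \<phi> s + (\<Sum>i\<in>P. \<theta> i) * \<phi> s"
    proof -
      have "(\<Sum>i\<in>P. (1 - \<theta> i) * \<phi> s) = (\<Sum>i\<in>P. 1 - \<theta> i) * \<phi> s"
        by (rule sum_distrib_right[symmetric])
      also have "(\<Sum>i\<in>P. 1 - \<theta> i) = real (card P) - (\<Sum>i\<in>P. \<theta> i)"
        unfolding sum_subtractf by simp
      finally have C: "(\<Sum>i\<in>P. (1 - \<theta> i) * \<phi> s) = (real (card P) - (\<Sum>i\<in>P. \<theta> i)) * \<phi> s" .
      have D: "(\<Sum>i\<in>P. \<phi> (x i - c i + s) - (1 - \<theta> i) * \<phi> s)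
          = (\<Sum>i\<in>P. \<phi> (x i - c i + s)) - (\<Sum>i\<in>P. (1 - \<theta> i) * \<phi> s)"
        by (rule sum_subtractf)
      show ?thesis unfolding D C by (simp add: left_diff_distrib)
    qed
    show ?thesis unfolding A B sumth using cardle by (simp add: of_nat_diff algebra_simps)
  qed
  have notP: "\<forall>i\<in>{1..n}-P. x i = Xlo i \<and> x i = Xhi i"
    using xin box unfolding P_def by force
  have memlo: "\<forall>m\<le>n. slo + (\<Sum>i=1..m. x i - Xlo i) \<in> Z"
  proof (intro allI impI)
    fix m assume m: "m \<le> n"
    define y where "y = (\<lambda>i. if i \<le> m then x i else Xlo i)"
    have "(\<Sum>i=1..n. y i) \<in> Z" using sumZ xin box unfolding y_def by auto
    moreover have "(\<Sum>i=1..n. y i) = slo + (\<Sum>i=1..m. x i - Xlo i)"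
    proof -
      have "(\<Sum>i=1..n. y i) - slo = (\<Sum>i=1..n. y i - Xlo i)" unfolding slo_def by (simp add: sum_subtractf)
      also have "\<dots> = (\<Sum>i\<in>{1..n}. if i \<in> {1..m} then x i - Xlo i else 0)"
        unfolding y_def by (intro sum.cong) auto
      also have "\<dots> = (\<Sum>i\<in>{1..n} \<inter> {1..m}. x i - Xlo i)" by (simp only: sum.inter_restrict[OF finite_atLeastAtMost])
      also have "{1..n} \<inter> {1..m} = {1..m}" using m by auto
      finally show ?thesis by simp
    qed
    ultimately show "slo + (\<Sum>i=1..m. x i - Xlo i) \<in> Z" by simp
  qed
  have lo: "(\<Sum>i=1..n. \<phi> (slo + (x i - Xlo i))) - (real n - 1) * \<phi> slo \<le> \<phi> (slo + (\<Sum>i=1..n. x i - Xlo i))"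
    using superadd[OF phiconv _ memlo, of n] xin by auto
  have slo_eq: "slo + (\<Sum>i=1..n. x i - Xlo i) = (\<Sum>i=1..n. x i)"
    unfolding slo_def by (simp add: sum_subtractf)
  have memhi: "\<forall>m\<le>n. shi + (\<Sum>i=1..m. x i - Xhi i) \<in> Z"
  proof (intro allI impI)
    fix m assume m: "m \<le> n"
    define y where "y = (\<lambda>i. if i \<le> m then x i else Xhi i)"
    have "(\<Sum>i=1..n. y i) \<in> Z" using sumZ xin box unfolding y_def by auto
    moreover have "(\<Sum>i=1..n. y i) = shi + (\<Sum>i=1..m. x i - Xhi i)"
    proof -
      have "(\<Sum>i=1..n. y i) - shi = (\<Sum>i=1..n. y i - Xhi i)" unfolding shi_def by (simp add: sum_subtractf)
      also have "\<dots> = (\<Sum>i\<in>{1..n}. if i \<in> {1..m} then x i - Xhi i else 0)"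
        unfolding y_def by (intro sum.cong) auto
      also have "\<dots> = (\<Sum>i\<in>{1..n} \<inter> {1..m}. x i - Xhi i)" by (simp only: sum.inter_restrict[OF finite_atLeastAtMost])
      also have "{1..n} \<inter> {1..m} = {1..m}" using m by auto
      finally show ?thesis by simp
    qed
    ultimately show "shi + (\<Sum>i=1..m. x i - Xhi i) \<in> Z" by simp
  qed
  have hi: "(\<Sum>i=1..n. \<phi> (shi + (x i - Xhi i))) - (real n - 1) * \<phi> shi \<le> \<phi> (shi + (\<Sum>i=1..n. x i - Xhi i))"
    using superadd[OF phiconv _ memhi, of n] xin by auto
  have shi_eq: "shi + (\<Sum>i=1..n. x i - Xhi i) = (\<Sum>i=1..n. x i)"
    unfolding shi_def by (simp add: sum_subtractf)
  have e1: "\<And>i. x i - Xlo i + slo = slo + (x i - Xlo i)" and e2: "\<And>i. x i - Xhi i + shi = shi + (x i - Xhi i)"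
    by simp_all
  have E1: "(\<Sum>i=1..n. \<phi> (x i - Xlo i + slo)) - (real n - 1) * \<phi> slo
           = (\<Sum>i\<in>P. \<phi> (x i - Xlo i + slo) - (1 - \<theta> i) * \<phi> slo)"
    by (rule eqgen) (use notP in blast)
  have E2: "(\<Sum>i=1..n. \<phi> (x i - Xhi i + shi)) - (real n - 1) * \<phi> shi
           = (\<Sum>i\<in>P. \<phi> (x i - Xhi i + shi) - (1 - \<theta> i) * \<phi> shi)"
    by (rule eqgen) (use notP in blast)
  have L1: "\<phi> (\<Sum>i=1..n. x i) \<ge> (\<Sum>i=1..n. \<phi> (x i - Xlo i + slo)) - (real n - 1) * \<phi> slo"
    using lo by (simp only: slo_eq e1)
  have L2: "\<phi> (\<Sum>i=1..n. x i) \<ge> (\<Sum>i=1..n. \<phi> (x i - Xhi i + shi)) - (real n - 1) * \<phi> shi"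
    using hi by (simp only: shi_eq e2)
  show ?thesis using L1 L2 E1 E2 by blast
qed

end
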